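(* Let $q$ be a power of an odd prime $p$ with $q\equiv1\pmod 4$, let $k$ be a divisor of $q-1$ with $k<p$, and set $e=(q-1)/k$. Let $B$ be the subgroup of order $k$ of $\mathbb{F}_q^\times$. (i) If $e$ is odd, then $(q,k)$ gives a $3$-$(q+1,k,\lambda)$ design with $\lambda=\tfrac12(k-1)(k-2)$, i.e. the $\mathrm{PSL}(2,q)$-orbit of $B$ is the block set of a $3$-$(q+1,k,\tfrac12(k-1)(k-2))$ design. (ii) If $e$ is even and $(q,k)$ gives a $3$-$(q+1,k,\lambda)$ design, then $\lambda=\tfrac14(k-1)(k-2)$.
   Context: The group $\mathrm{PSL}(2,q)$ acts on $\mathrm{PG}(1,q)=\mathbb{F}_q\cup\{\infty\}$ by linear fractional transformations $z\mapsto (az+b)/(cz+d)$ with $ad-bc$ a nonzero square in $\mathbb{F}_q$ (matrices modulo $\pm I$). A $k$-subset $B$ of $\mathrm{PG}(1,q)$ is a starter of a $3$-design if its orbit $\{gB: g\in\mathrm{PSL}(2,q)\}$ is the block set of a $3$-$(q+1,k,\lambda)$ design (every $3$-subset of the $q+1$ points lies in exactly $\lambda$ blocks) for some positive integer $\lambda$. For $q\equiv 1\pmod 4$ and $k\mid q-1$, "$(q,k)$ gives a $3$-design" means the unique subgroup of order $k$ of $\mathbb{F}_q^\times$ is such a starter. *)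

theory Defs
  imports Main "HOL-Computational_Algebra.Primes"
begin

text \<open>The projective line PG(1,q) over a finite field 'a is modelled as 'a option:
  Some x is the affine point x, None is the point at infinity.\<close>

definition lft :: "'a::field \<Rightarrow> 'a \<Rightarrow> 'a \<Rightarrow> 'a \<Rightarrow> 'a option \<Rightarrow> 'a option" where
  "lft a b c d z = (case z of
      None \<Rightarrow> (if c = 0 then None else Some (a / c))
    | Some x \<Rightarrow> (if c * x + d = 0 then None else Some ((a * x + b) / (c * x + d))))"

definition psl2 :: "('a::field option \<Rightarrow> 'a option) set" where
  "psl2 = {lft a b c d | a b c d. \<exists>s. s \<noteq> 0 \<and> a * d - b * c = s ^ 2}"

definition psl2_orbit :: "'a::field option set \<Rightarrow> 'a option set set" where
  "psl2_orbit B = {g ` B | g. g \<in> psl2}"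

definition is_3_design :: "'p set \<Rightarrow> 'p set set \<Rightarrow> nat \<Rightarrow> nat \<Rightarrow> nat \<Rightarrow> bool" where
  "is_3_design V Bs v k lam \<longleftrightarrow> finite V \<and> card V = v \<and> lam > 0 \<and>
     (\<forall>X\<in>Bs. X \<subseteq> V \<and> card X = k) \<and>
     (\<forall>T. T \<subseteq> V \<longrightarrow> card T = 3 \<longrightarrow> card {X\<in>Bs. T \<subseteq> X} = lam)"

definition gives_3_design :: "'a::{field,finite} set \<Rightarrow> nat \<Rightarrow> nat \<Rightarrow> bool" where
  "gives_3_design B k lam \<longleftrightarrow>
     is_3_design (UNIV :: 'a option set) (psl2_orbit (Some ` B)) (card (UNIV :: 'a set) + 1) k lam"


end

theory Submission imports Defs "HOL-Computational_Algebra.Polynomial" "HOL-Library.Cardinality"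
begin


lemma lft_None: "lft a b c d None = (if c = 0 then None else Some (a / c))"
  by (simp add: lft_def)
lemma lft_Some: "lft a b c d (Some x) = (if c * x + d = 0 then None else Some ((a * x + b) / (c * x + d)))"
  by (simp add: lft_def)

lemma lft_comp:
  fixes a b c d a' b' c' d' :: "'a::field"
  assumes "a*d - b*c \<noteq> 0" "a'*d' - b'*c' \<noteq> 0"
  shows "lft a b c d (lft a' b' c' d' z) = lft (a*a'+b*c') (a*b'+b*d') (c*a'+d*c') (c*b'+d*d') z"
proof (cases z)
  case None
  show ?thesis
  proof (cases "c' = 0")
    case True
    then have "a' \<noteq> 0" using assms by auto
    then show ?thesis using None True by (auto simp: lft_None)
  next
    case False
    define u where "u = a'/c'"
    have e: "c * u + d = (c*a'+d*c')/c'" using False unfolding u_def by (simp add: field_simps)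
    have e2: "a * u + b = (a*a'+b*c')/c'" using False unfolding u_def by (simp add: field_simps)
    have z: "c * u + d = 0 \<longleftrightarrow> c*a'+d*c' = 0" using e False by simp
    have v: "(a * u + b) / (c * u + d) = (a*a'+b*c')/(c*a'+d*c')" unfolding e e2 using False by simp
    have "lft a' b' c' d' z = Some u" using None False by (simp add: lft_None u_def)
    then show ?thesis using None False z v
      by (simp only: lft_Some lft_None; simp?)
  qed
next
  case (Some x)
  show ?thesis
  proof (cases "c'*x+d' = 0")
    case True
    have "a'*x+b' \<noteq> 0"
    proof
      assume h: "a'*x+b' = 0"
      have "b' = -a'*x" "d' = -c'*x" using h True by (simp_all add: eq_neg_iff_add_eq_0 add.commute)
      then have "a'*d' - b'*c' = 0" by (simp add: algebra_simps)
      then show False using assms by simp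
    qed
    have "(c*a'+d*c')*x + (c*b'+d*d') = c*(a'*x+b') + d*(c'*x+d')" by (simp add: algebra_simps)
    then have e: "(c*a'+d*c')*x + (c*b'+d*d') = c*(a'*x+b')" using True by simp
    have "(a*a'+b*c')*x + (a*b'+b*d') = a*(a'*x+b') + b*(c'*x+d')" by (simp add: algebra_simps)
    then have e2: "(a*a'+b*c')*x + (a*b'+b*d') = a*(a'*x+b')" using True by simp
    have v: "a*(a'*x+b') / (c*(a'*x+b')) = a / c" using \<open>a'*x+b' \<noteq> 0\<close> by simp
    show ?thesis using Some True \<open>a'*x+b' \<noteq> 0\<close>
      by (simp only: lft_Some e e2 v; simp add: lft_None)
  next
    case False
    define u where "u = (a'*x+b') / (c'*x+d')"
    have e: "c * u + d = ((c*a'+d*c')*x + (c*b'+d*d'))/(c'*x+d')" using False unfolding u_def by (simp add: field_simps)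
    have e2: "a * u + b = ((a*a'+b*c')*x + (a*b'+b*d'))/(c'*x+d')" using False unfolding u_def by (simp add: field_simps)
    have z: "c * u + d = 0 \<longleftrightarrow> (c*a'+d*c')*x + (c*b'+d*d') = 0" using e False by simp
    have v: "(a * u + b) / (c * u + d) = ((a*a'+b*c')*x + (a*b'+b*d')) / ((c*a'+d*c')*x + (c*b'+d*d'))"
      unfolding e e2 using False by simp
    have "lft a' b' c' d' z = Some u" using Some False by (simp add: lft_Some u_def)
    then show ?thesis using Some False z v
      by (simp only: lft_Some; simp?)
  qed
qed

lemma lft_id: "(d::'a::field) \<noteq> 0 \<Longrightarrow> lft d 0 0 d z = z"
  by (cases z) (auto simp: lft_def)

lemma lft_scale: "(m::'a::field) \<noteq> 0 \<Longrightarrow> lft (m*a) (m*b) (m*c) (m*d) = lft a b c d"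
proof
  fix z assume m: "m \<noteq> 0"
  show "lft (m*a) (m*b) (m*c) (m*d) z = lft a b c d z"
  proof (cases z)
    case (Some x)
    have e: "m*c*x + m*d = m*(c*x+d)" "m*a*x + m*b = m*(a*x+b)" by (simp_all add: algebra_simps)
    show ?thesis using Some m by (simp only: lft_Some e; simp)
  next
    case None
    show ?thesis using None m by (simp add: lft_None)
  qed
qed

lemma lft_inv:
  fixes a b c d :: "'a::field"
  assumes "a*d - b*c \<noteq> 0"
  shows "lft d (-b) (-c) a (lft a b c d z) = z" "lft a b c d (lft d (-b) (-c) a z) = z"
proof -
  have d2: "d*a - (-b)*(-c) \<noteq> 0" using assms by (simp add: algebra_simps)
  have m1: "d*a+(-b)*c = a*d-b*c" "d*b+(-b)*d = 0" "(-c)*a+a*c = 0" "(-c)*b+a*d = a*d-b*c"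
    by (simp_all add: algebra_simps)
  have m2: "a*d+b*(-c) = a*d-b*c" "a*(-b)+b*a = 0" "c*d+d*(-c) = 0" "c*(-b)+d*a = a*d-b*c"
    by (simp_all add: algebra_simps)
  show "lft d (-b) (-c) a (lft a b c d z) = z"
    using lft_comp[OF d2 assms, of z] lft_id[OF assms, of z] by (simp only: m1)
  show "lft a b c d (lft d (-b) (-c) a z) = z"
    using lft_comp[OF assms d2, of z] lft_id[OF assms, of z] by (simp only: m2)
qed



lemma of_nat_card_field: "of_nat CARD('a::{field,finite}) = (0::'a)"
proof -
  have "(\<Sum>x\<in>(UNIV::'a set). x + 1) = (\<Sum>x\<in>UNIV. x)"
    by (rule sum.reindex_bij_witness[of _ "\<lambda>x. x - 1" "\<lambda>x. x + 1"]) auto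
  moreover have "(\<Sum>x\<in>(UNIV::'a set). x + 1) = (\<Sum>x\<in>UNIV. x) + of_nat CARD('a)"
    by (simp add: sum.distrib)
  ultimately show ?thesis by simp
qed

lemma two_ne_zero_field:
  assumes "odd CARD('a::{field,finite})" shows "(2::'a) \<noteq> 0"
proof
  assume h: "(2::'a) = 0"
  obtain m where m: "CARD('a) = 2*m+1" using assms oddE by blast
  have "(of_nat (2*m+1)::'a) = 0" using of_nat_card_field[where 'a='a] m by metis
  then show False using h by simp
qed

lemma prod_pow_card:
  fixes x :: "'a::field"
  assumes "finite S" "0 \<notin> S" "(\<lambda>y. x*y) ` S = S"
  shows "x ^ card S = 1"
proof -
  have inj: "inj_on (\<lambda>y. x*y) S"
  proof (cases "x = 0")
    case True
    then have "S \<subseteq> {0}" using assms(3) by auto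
    then have "S = {}" using assms(2) by auto
    then show ?thesis by simp
  qed (auto simp: inj_on_def)
  have "prod (\<lambda>y. y) S = prod (\<lambda>y. y) ((\<lambda>y. x*y) ` S)" using assms(3) by simp
  also have "\<dots> = prod (\<lambda>y. x*y) S" using prod.reindex[OF inj, of "\<lambda>y. y"] by simp
  also have "\<dots> = x ^ card S * prod (\<lambda>y. y) S" by (simp add: prod.distrib)
  finally have "prod (\<lambda>y. y) S * 1 = prod (\<lambda>y. y) S * x ^ card S" by (simp add: mult.commute)
  moreover have "prod (\<lambda>y. y) S \<noteq> 0" using assms(1,2) by auto
  ultimately show ?thesis by (metis mult_left_cancel)
qed

lemma fermat_field:
  fixes x :: "'a::{field,finite}"
  assumes "x \<noteq> 0" shows "x ^ (CARD('a) - 1) = 1"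
proof -
  have c: "card {y::'a. y \<noteq> 0} = CARD('a) - 1"
  proof -
    have "{y::'a. y \<noteq> 0} = UNIV - {0}" by auto
    then show ?thesis by (simp add: card_Diff_singleton)
  qed
  have "(\<lambda>y. x*y) ` {y. y \<noteq> 0} = {y. y \<noteq> 0}"
  proof
    show "(\<lambda>y. x*y) ` {y. y \<noteq> 0} \<subseteq> {y. y \<noteq> 0}" using assms by auto
    show "{y. y \<noteq> 0} \<subseteq> (\<lambda>y. x*y) ` {y. y \<noteq> 0}"
    proof
      fix y :: 'a assume "y \<in> {y. y \<noteq> 0}"
      then have "y = x * (y/x)" "y/x \<in> {y. y \<noteq> 0}" using assms by auto
      then show "y \<in> (\<lambda>y. x*y) ` {y. y \<noteq> 0}" by blast
    qed
  qed
  from prod_pow_card[OF _ _ this] c show ?thesis by simp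
qed

lemma card_roots_le:
  fixes a :: "'a::field"
  assumes "m \<ge> 1"
  shows "card {x::'a. x ^ m = a} \<le> m" "finite {x::'a. x ^ m = a}"
proof -
  define P where "P = monom (1::'a) m + [:-a:]"
  have ev: "poly P x = x ^ m - a" for x by (simp add: P_def poly_monom)
  have dP: "degree P = m" using assms unfolding P_def
    by (subst degree_add_eq_left) (auto simp: degree_monom_eq)
  have "P \<noteq> 0" using dP assms by auto
  have eq: "{x::'a. x ^ m = a} = {x. poly P x = 0}" by (auto simp: ev)
  show "card {x::'a. x ^ m = a} \<le> m" unfolding eq using card_poly_roots_bound[OF \<open>P \<noteq> 0\<close>] dP by simp
  show "finite {x::'a. x ^ m = a}" unfolding eq using poly_roots_finite[OF \<open>P \<noteq> 0\<close>] .
qed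

definition sqr :: "'a::field \<Rightarrow> bool" where
  "sqr x \<longleftrightarrow> (\<exists>s. s \<noteq> 0 \<and> x = s ^ 2)"

lemma euler_field:
  fixes x :: "'a::{field,finite}"
  assumes odd: "odd CARD('a)"
  shows "sqr x \<longleftrightarrow> x \<noteq> 0 \<and> x ^ ((CARD('a) - 1) div 2) = 1"
proof -
  define h where "h = (CARD('a) - 1) div 2"
  have qh: "CARD('a) - 1 = 2 * h" using odd unfolding h_def by simp
  have h1: "h \<ge> 1"
  proof -
    have "(0::'a) \<noteq> 1" by simp
    then have "card {0::'a, 1} \<le> CARD('a)" by (intro card_mono) auto
    then have "CARD('a) \<ge> 2" by simp
    then show ?thesis using qh odd by simp
  qed
  define Sq where "Sq = {y::'a. sqr y}"
  define R where "R = {y::'a. y ^ h = 1}"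
  have sub: "Sq \<subseteq> R"
  proof
    fix y assume "y \<in> Sq"
    then obtain s where s: "s \<noteq> 0" "y = s^2" unfolding Sq_def sqr_def by auto
    have "y ^ h = s ^ (2*h)" using s by (simp add: power_mult)
    also have "\<dots> = 1" using fermat_field[OF s(1)] qh by simp
    finally show "y \<in> R" unfolding R_def by simp
  qed
  have cR: "card R \<le> h" "finite R" unfolding R_def using card_roots_le[OF h1] by auto
  have "{y::'a. y \<noteq> 0} \<subseteq> (\<Union>y\<in>Sq. {s. s ^ 2 = y})"
    unfolding Sq_def sqr_def by auto
  then have "card {y::'a. y \<noteq> 0} \<le> card (\<Union>y\<in>Sq. {s. s ^ 2 = y})"
    by (intro card_mono) auto
  also have "\<dots> \<le> (\<Sum>y\<in>Sq. card {s. s ^ 2 = y})" by (rule card_UN_le) simp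
  also have "\<dots> \<le> (\<Sum>y\<in>Sq. 2)" by (intro sum_mono card_roots_le) auto
  finally have "card {y::'a. y \<noteq> 0} \<le> 2 * card Sq" by simp
  moreover have "card {y::'a. y \<noteq> 0} = CARD('a) - 1"
  proof -
    have "{y::'a. y \<noteq> 0} = UNIV - {0}" by auto
    then show ?thesis by (simp add: card_Diff_singleton)
  qed
  ultimately have "card Sq \<ge> h" using qh by simp
  then have "card R \<le> card Sq" using cR by linarith
  then have "Sq = R" using sub cR(2) card_seteq by metis
  moreover have "sqr x \<longleftrightarrow> x \<in> Sq" unfolding Sq_def by simp
  moreover have "sqr x \<Longrightarrow> x \<noteq> 0" unfolding sqr_def by auto
  ultimately show ?thesis unfolding R_def h_def by auto
qed


lemma chi_pm:
  fixes x :: "'a::{field,finite}"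
  assumes "odd CARD('a)" "x \<noteq> 0"
  shows "x ^ ((CARD('a) - 1) div 2) = 1 \<or> x ^ ((CARD('a) - 1) div 2) = -1"
proof -
  define h where "h = (CARD('a) - 1) div 2"
  have qh: "CARD('a) - 1 = 2 * h" using assms(1) unfolding h_def by simp
  have "(x ^ h) ^ 2 = 1" using fermat_field[OF assms(2)] qh
    by (simp add: power_mult[symmetric] mult.commute)
  then have "(x^h - 1) * (x^h + 1) = 0" by (simp add: algebra_simps power2_eq_square)
  then show ?thesis unfolding h_def by (auto simp: eq_neg_iff_add_eq_0)
qed

lemma nsqr_iff:
  fixes x :: "'a::{field,finite}"
  assumes "odd CARD('a)" "x \<noteq> 0"
  shows "\<not> sqr x \<longleftrightarrow> x ^ ((CARD('a) - 1) div 2) = -1"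
proof -
  have "(1::'a) \<noteq> -1" using two_ne_zero_field[OF assms(1)]
    by (metis add_eq_0_iff2 one_add_one)
  then show ?thesis using chi_pm[OF assms] euler_field[OF assms(1), of x] assms(2) by auto
qed

lemma sqr_nz: "sqr x \<Longrightarrow> x \<noteq> 0"
  unfolding sqr_def by auto

lemma sqr_mult: "sqr x \<Longrightarrow> sqr y \<Longrightarrow> sqr (x*y)"
  unfolding sqr_def by (metis mult_eq_0_iff power_mult_distrib)

lemma sqr_inverse: "sqr x \<Longrightarrow> sqr (inverse (x::'a::field))"
  unfolding sqr_def by (metis inverse_nonzero_iff_nonzero power_inverse)

lemma sqr_divide: "sqr x \<Longrightarrow> sqr y \<Longrightarrow> sqr (x / (y::'a::field))"
  by (simp add: divide_inverse sqr_mult sqr_inverse)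

lemma sqr_square: "x \<noteq> 0 \<Longrightarrow> sqr (x^2)"
  unfolding sqr_def by auto

lemma nsqr_mult:
  fixes x :: "'a::{field,finite}"
  assumes "odd CARD('a)" "x \<noteq> 0" "y \<noteq> 0" "\<not> sqr x" "\<not> sqr y"
  shows "sqr (x*y)"
  using nsqr_iff[OF assms(1) assms(2)] nsqr_iff[OF assms(1) assms(3)] euler_field[OF assms(1), of "x*y"] assms
  by (simp add: power_mult_distrib)

lemma sqr_nsqr_mult:
  fixes x :: "'a::{field,finite}"
  assumes "odd CARD('a)" "sqr x" "y \<noteq> 0" "\<not> sqr y"
  shows "\<not> sqr (x*y)"
proof -
  have x0: "x \<noteq> 0" using assms(2) sqr_nz by auto
  show ?thesis
    using nsqr_iff[OF assms(1), of "x*y"] nsqr_iff[OF assms(1) assms(3)] euler_field[OF assms(1), of "x"] assms x0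
    by (simp add: power_mult_distrib)
qed

lemma sqr_minus1:
  assumes "CARD('a::{field,finite}) mod 4 = 1"
  shows "sqr (-1::'a)"
proof -
  have o: "odd CARD('a)" using assms by presburger
  have "even ((CARD('a) - 1) div 2)" using assms by presburger
  then have "(-1::'a) ^ ((CARD('a) - 1) div 2) = 1" by simp
  then show ?thesis using euler_field[OF o] by simp
qed

lemma nonsq_exists:
  assumes "odd CARD('a::{field,finite})"
  shows "\<exists>v::'a. v \<noteq> 0 \<and> \<not> sqr v"
proof (rule ccontr)
  assume nt: "\<not> ?thesis"
  define h where "h = (CARD('a) - 1) div 2"
  have qh: "CARD('a) - 1 = 2 * h" using assms unfolding h_def by simp
  have h1: "h \<ge> 1"
  proof -
    have "card {0::'a, 1} \<le> CARD('a)" by (intro card_mono) auto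
    then have "CARD('a) \<ge> 2" by simp
    then show ?thesis using qh by simp
  qed
  have "{y::'a. y \<noteq> 0} \<subseteq> {y. y ^ h = 1}"
    using nt euler_field[OF assms] unfolding h_def by auto
  then have "card {y::'a. y \<noteq> 0} \<le> card {y::'a. y ^ h = 1}"
    by (intro card_mono) auto
  also have "\<dots> \<le> h" using card_roots_le(1)[OF h1, of 1] by simp
  finally have "card {y::'a. y \<noteq> 0} \<le> h" .
  moreover have "card {y::'a. y \<noteq> 0} = CARD('a) - 1"
  proof -
    have "{y::'a. y \<noteq> 0} = UNIV - {0}" by auto
    then show ?thesis by (simp add: card_Diff_singleton)
  qed
  ultimately show False using qh h1 by simp
qed



lemma char_nz:
  assumes "prime p" "CARD('a::{field,finite}) = p ^ n" "0 < m" "m < p"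
  shows "(of_nat m :: 'a) \<noteq> 0"
proof
  assume m0: "(of_nat m :: 'a) = 0"
  have "card {0::'a, 1} \<le> CARD('a)" by (intro card_mono) auto
  then have "n \<noteq> 0" using assms(2) by (cases n) auto
  have "(of_nat p :: 'a) ^ n = 0" using of_nat_card_field[where 'a='a] assms(2) by (metis of_nat_power)
  then have p0: "(of_nat p :: 'a) = 0" by simp
  have "\<not> p dvd m" using assms(3,4) by (auto dest: dvd_imp_le)
  then have "coprime p m" using prime_imp_coprime[OF assms(1)] by blast
  then have "gcd m p = 1" by (simp add: coprime_iff_gcd_eq_1 gcd.commute)
  then obtain x y where "m * x = p * y + 1" using bezout_nat[of m p] assms(3) by auto
  then have "(of_nat (m*x) :: 'a) = of_nat (p*y+1)" by simp
  then have "(0::'a) = 1" using m0 p0 by simp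
  then show False by simp
qed

lemma subgroup_pow:
  fixes B :: "'a::field set"
  assumes "finite B" "B \<subseteq> {x. x \<noteq> 0}" "\<forall>x\<in>B. \<forall>y\<in>B. x * y \<in> B" "\<forall>x\<in>B. inverse x \<in> B" "x \<in> B"
  shows "x ^ card B = 1"
proof (rule prod_pow_card)
  show "(\<lambda>y. x*y) ` B = B"
  proof
    show "(\<lambda>y. x*y) ` B \<subseteq> B" using assms by auto
    show "B \<subseteq> (\<lambda>y. x*y) ` B"
    proof
      fix y assume y: "y \<in> B"
      have "x \<noteq> 0" using assms by auto
      then have "y = x * (inverse x * y)" by simp
      moreover have "inverse x * y \<in> B" using assms y by auto
      ultimately show "y \<in> (\<lambda>y. x*y) ` B" by blast
    qed
  qed
qed (use assms in auto)

lemma polyfun_vanish: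
  fixes c :: "nat \<Rightarrow> 'a::field"
  assumes "finite S" "card S \<ge> m" "\<forall>w\<in>S. (\<Sum>j<m. c j * w ^ j) = 0"
  shows "\<forall>j<m. c j = 0"
proof -
  define P where "P = (\<Sum>j<m. monom (c j) j)"
  have ev: "poly P w = (\<Sum>j<m. c j * w ^ j)" for w
    unfolding P_def by (simp add: poly_sum poly_monom)
  have co: "coeff P i = (if i < m then c i else 0)" for i
    unfolding P_def coeff_sum by (simp add: coeff_monom)
  have "P = 0"
  proof (rule ccontr)
    assume P0: "P \<noteq> 0"
    then have "m \<noteq> 0" unfolding P_def by (cases m) auto
    have "degree P \<le> m - 1" by (rule degree_le) (auto simp: co)
    have "S \<subseteq> {x. poly P x = 0}" using assms(3) ev by auto
    then have "card S \<le> card {x. poly P x = 0}"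
      by (intro card_mono poly_roots_finite P0)
    also have "\<dots> \<le> degree P" by (rule card_poly_roots_bound[OF P0])
    finally show False using assms(2) \<open>degree P \<le> m - 1\<close> \<open>m \<noteq> 0\<close> by linarith
  qed
  then show ?thesis using co by (metis coeff_0)
qed


lemma alg_case:
  fixes a b c d :: "'a::field"
  assumes E1: "a * b^(m+1) = c * d^(m+1)" and E2: "a^2 * b^m = c^2 * d^m" and det: "a*d - b*c \<noteq> 0"
  shows "(b = 0 \<and> c = 0) \<or> (a = 0 \<and> d = 0)"
proof (cases "b = 0")
  case True
  then have "d \<noteq> 0" "a \<noteq> 0" using det by auto
  then have "c = 0" using E1 True by simp
  then show ?thesis using True by simp
next
  case b: False
  show ?thesis
  proof (cases "d = 0")
    case True
    then have "c \<noteq> 0" using det by auto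
    then have "a = 0" using E1 True b by simp
    then show ?thesis using True by simp
  next
    case d: False
    have c: "c \<noteq> 0"
    proof
      assume "c = 0"
      then have "a = 0" using E1 b by simp
      then show False using det \<open>c = 0\<close> by simp
    qed
    have e3: "2*m+2 = m + (m+2)" by simp
    have pw: "x^(2*m+2) = x^m * x^(m+2)" for x :: 'a by (simp only: e3 power_add)
    have "(a * b^(m+1))^2 = (c * d^(m+1))^2" using E1 by simp
    have ee: "2*m+2 = (m+1)*2" by simp
    have "x^(2*m+2) = (x^(m+1))^2" for x :: 'a by (simp only: ee power_mult)
    then have "a^2 * b^(2*m+2) = c^2 * d^(2*m+2)" using \<open>(a * b^(m+1))^2 = (c * d^(m+1))^2\<close>
      by (simp add: power_mult_distrib)
    moreover have "a^2 * b^(2*m+2) = (a^2 * b^m) * b^(m+2)" by (simp only: pw mult.assoc)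
    ultimately have "c^2 * d^(2*m+2) = c^2 * d^m * b^(m+2)" using E2 by simp
    moreover have "c^2 * d^(2*m+2) = c^2 * d^m * d^(m+2)" by (simp only: pw mult.assoc)
    ultimately have "c^2 * d^m * d^(m+2) = c^2 * d^m * b^(m+2)" by metis
    then have "c^2 * d^m * (d^(m+2) - b^(m+2)) = 0" by (simp add: right_diff_distrib)
    moreover have nz: "c^2 * d^m \<noteq> 0" using c d by simp
    ultimately have "d^(m+2) - b^(m+2) = 0" by (metis mult_eq_0_iff)
    then have dm: "d^(m+2) = b^(m+2)" by simp
    have "a * b^(m+1) * d = c * d^(m+2)" using E1 by (simp add: algebra_simps)
    also have "\<dots> = c * b^(m+2)" using dm by simp
    finally have "b^(m+1) * (a*d - b*c) = 0" by (simp add: algebra_simps)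
    then show ?thesis using b det by simp
  qed
qed

lemma stab_B:
  fixes a b c d :: "'a::{field,finite}"
  assumes p: "prime p" "CARD('a) = p^n" and kp: "k < p" "3 \<le> k"
    and B: "B \<subseteq> {x. x \<noteq> 0}" "\<forall>x\<in>B. \<forall>y\<in>B. x * y \<in> B" "\<forall>x\<in>B. inverse x \<in> B" "card B = k"
    and det: "a*d - b*c \<noteq> 0" and maps: "\<forall>w\<in>B. lft a b c d (Some w) \<in> Some ` B"
  shows "(b = 0 \<and> c = 0) \<or> (a = 0 \<and> d = 0)"
proof -
  define cf where "cf j = of_nat (k choose j) * (a^j * b^(k-j) - c^j * d^(k-j))" for j
  have key: "\<forall>w\<in>B. (\<Sum>j<k. (cf j + (if j = 0 then cf k else 0)) * w^j) = 0"
  proof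
    fix w assume w: "w \<in> B"
    obtain v where v: "v \<in> B" "lft a b c d (Some w) = Some v" using maps w by auto
    then have nz: "c*w+d \<noteq> 0" and vv: "v = (a*w+b)/(c*w+d)" by (auto simp: lft_Some split: if_splits)
    have vk: "v^k = 1" using subgroup_pow[of B v] B v(1) by simp
    have wk: "w^k = 1" using subgroup_pow[of B w] B w by simp
    have eq: "(a*w+b)^k = (c*w+d)^k" using vk nz vv by (simp add: power_divide)
    have bin: "(x*w+y)^k = (\<Sum>j\<le>k. of_nat (k choose j) * x^j * y^(k-j) * w^j)" for x y :: 'a
      unfolding binomial_ring by (rule sum.cong) (simp_all add: power_mult_distrib mult_ac)
    have "(\<Sum>j\<le>k. cf j * w^j) = (a*w+b)^k - (c*w+d)^k"
      unfolding bin cf_def sum_subtractf[symmetric] by (rule sum.cong) (simp_all add: algebra_simps)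
    then have "(\<Sum>j\<le>k. cf j * w^j) = 0" using eq by simp
    then have "(\<Sum>j<k. cf j * w^j) + cf k = 0" using wk by (simp add: lessThan_Suc_atMost[symmetric])
    moreover have "(\<Sum>j<k. (cf j + (if j = 0 then cf k else 0)) * w^j) = (\<Sum>j<k. cf j * w^j) + cf k"
    proof -
      have "(\<Sum>j<k. (if j = 0 then cf k else 0) * w^j) = (\<Sum>j<k. if j = 0 then cf k else 0)"
        by (rule sum.cong) auto
      also have "\<dots> = cf k" using kp by (simp add: sum.delta)
      finally show ?thesis by (simp add: distrib_right sum.distrib)
    qed
    ultimately show "(\<Sum>j<k. (cf j + (if j = 0 then cf k else 0)) * w^j) = 0" by simp
  qed
  have allj: "\<forall>j<k. cf j + (if j = 0 then cf k else 0) = 0"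
    by (rule polyfun_vanish[OF _ _ key]) (use B in auto)
  have c1: "cf 1 = 0" using allj[rule_format, of 1] kp by simp
  have c2: "cf 2 = 0" using allj[rule_format, of 2] kp by simp
  have k0: "(of_nat k :: 'a) \<noteq> 0" using char_nz[OF p, of k] kp by simp
  have k1: "(of_nat (k-1) :: 'a) \<noteq> 0" using char_nz[OF p, of "k-1"] kp by simp
  have ev: "even (k * (k - 1))"
  proof (cases "even k")
    case True then show ?thesis by simp
  next
    case False then have "even (k-1)" using kp by simp
    then show ?thesis by simp
  qed
  have "2 * (k choose 2) = k * (k - 1)" using ev by (simp add: choose_two)
  then have "(of_nat 2 :: 'a) * of_nat (k choose 2) = of_nat k * of_nat (k-1)" by (metis of_nat_mult)
  then have k2: "(of_nat (k choose 2) :: 'a) \<noteq> 0" using k0 k1 by auto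
  define m where "m = k - 2"
  have m: "k = m + 2" using kp unfolding m_def by simp
  have E1: "a * b^(m+1) = c * d^(m+1)" using c1 k0 unfolding cf_def m by simp
  have E2: "a^2 * b^m = c^2 * d^m" using c2 k2 unfolding cf_def m by simp
  show ?thesis by (rule alg_case[OF E1 E2 det])
qed



definition Mob :: "'a::field \<Rightarrow> 'a \<Rightarrow> 'a \<Rightarrow> 'a \<Rightarrow> 'a option \<Rightarrow> 'a option" where
  "Mob r x y z = lft (r*(z-x)) (-(r*y*(z-x))) (z-y) (-(x*(z-y)))"

definition detM :: "'a::field \<Rightarrow> 'a \<Rightarrow> 'a \<Rightarrow> 'a \<Rightarrow> 'a" where
  "detM r x y z = r*(z-x)*(z-y)*(y-x)"

lemma detM_eq: "(r*(z-x)) * (-(x*(z-y))) - (-(r*y*(z-x))) * (z-y) = detM r x y z"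
  unfolding detM_def by (simp add: algebra_simps)

lemma detM_nz: "r \<noteq> 0 \<Longrightarrow> x \<noteq> y \<Longrightarrow> x \<noteq> z \<Longrightarrow> y \<noteq> z \<Longrightarrow> detM r x y (z::'a::field) \<noteq> 0"
  unfolding detM_def by auto

lemma Mob_pts:
  fixes x y z r :: "'a::field"
  assumes "r \<noteq> 0" "x \<noteq> y" "x \<noteq> z" "y \<noteq> z"
  shows "Mob r x y z (Some x) = None" "Mob r x y z (Some y) = Some 0" "Mob r x y z (Some z) = Some r"
proof -
  have e1: "(z-y)*x + -(x*(z-y)) = 0" by (simp add: algebra_simps)
  show "Mob r x y z (Some x) = None" unfolding Mob_def lft_Some e1 by simp
  have e2: "(z-y)*y + -(x*(z-y)) = (z-y)*(y-x)" "r*(z-x)*y + -(r*y*(z-x)) = 0" by (simp_all add: algebra_simps)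
  show "Mob r x y z (Some y) = Some 0" unfolding Mob_def lft_Some e2 using assms by simp
  have e3: "(z-y)*z + -(x*(z-y)) = (z-y)*(z-x)" "r*(z-x)*z + -(r*y*(z-x)) = r*((z-y)*(z-x))" by (simp_all add: algebra_simps)
  show "Mob r x y z (Some z) = Some r" unfolding Mob_def lft_Some e3 using assms by simp
qed

lemma Mob_unique:
  fixes a b c d x y z r :: "'a::field"
  assumes det: "a*d - b*c \<noteq> 0" and d: "r \<noteq> 0" "x \<noteq> y" "x \<noteq> z" "y \<noteq> z"
    and h: "lft a b c d (Some x) = None" "lft a b c d (Some y) = Some 0" "lft a b c d (Some z) = Some r"
  shows "lft a b c d = Mob r x y z \<and> (\<exists>\<mu>. \<mu> \<noteq> 0 \<and> a*d - b*c = \<mu>^2 * detM r x y z)"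
proof -
  have hx: "c*x + d = 0" using h(1) by (auto simp: lft_Some split: if_splits)
  have hy: "c*y + d \<noteq> 0" "a*y + b = 0" using h(2) by (auto simp: lft_Some split: if_splits)
  have hz: "c*z + d \<noteq> 0" "a*z + b = r*(c*z+d)" using h(3) by (auto simp: lft_Some field_simps split: if_splits)
  have dd: "d = -(c*x)" using hx by (simp add: eq_neg_iff_add_eq_0 add.commute)
  have bb: "b = -(a*y)" using hy by (simp add: eq_neg_iff_add_eq_0 add.commute)
  have "a*(z-y) = r*c*(z-x)" using hz(2) unfolding dd bb by (simp add: algebra_simps)
  define \<mu> where "\<mu> = c/(z-y)"
  have zy: "z - y \<noteq> 0" using d by simp
  have cc: "c = \<mu>*(z-y)" unfolding \<mu>_def using zy by simp
  have aa: "a = \<mu>*(r*(z-x))" using \<open>a*(z-y) = r*c*(z-x)\<close> zy unfolding \<mu>_def by (simp add: field_simps)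
  have bb2: "b = \<mu>*(-(r*y*(z-x)))" unfolding bb aa by (simp add: algebra_simps)
  have dd2: "d = \<mu>*(-(x*(z-y)))" unfolding dd cc by (simp add: algebra_simps)
  have m0: "\<mu> \<noteq> 0"
  proof
    assume "\<mu> = 0"
    then have "c = 0" "d = 0" using cc dd2 by auto
    then show False using det by simp
  qed
  have "lft a b c d = Mob r x y z" unfolding Mob_def aa bb2 cc dd2 by (rule lft_scale[OF m0])
  moreover have "a*d - b*c = \<mu>^2 * detM r x y z"
    unfolding aa bb2 cc dd2 detM_eq[symmetric] by (simp add: algebra_simps power2_eq_square)
  ultimately show ?thesis using m0 by blast
qed

lemma det_comp: "(a*a'+b*c')*(c*b'+d*d') - (a*b'+b*d')*(c*a'+d*c') = (a*d-b*c)*(a'*d'-b'*c')"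
  for a b c d a' b' c' d' :: "'a::field"
  by (simp add: algebra_simps)

lemma psl2_iff: "g \<in> psl2 \<longleftrightarrow> (\<exists>a b c d. g = lft a b c (d::'a::field) \<and> sqr (a*d - b*c))"
  unfolding psl2_def sqr_def by auto

lemma lft_inj:
  fixes a b c d :: "'a::field"
  assumes "a*d - b*c \<noteq> 0"
  shows "inj (lft a b c d)"
  by (metis injI lft_inv(1)[OF assms])

lemma orbit_closed:
  fixes a b c d :: "'a::field"
  assumes "sqr (a*d - b*c)" "X \<in> psl2_orbit S"
  shows "lft a b c d ` X \<in> psl2_orbit S"
proof -
  obtain g where g: "X = g ` S" "g \<in> psl2" using assms(2) unfolding psl2_orbit_def by auto
  obtain a' b' c' d' where g2: "g = lft a' b' c' d'" "sqr (a'*d'-b'*c')" using g(2) psl2_iff by blast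
  have n1: "a*d-b*c \<noteq> 0" "a'*d'-b'*c' \<noteq> 0" using sqr_nz[OF assms(1)] sqr_nz[OF g2(2)] by auto
  have "lft a b c d ` X = (lft a b c d \<circ> g) ` S" using g(1) by (simp add: image_comp)
  also have "lft a b c d \<circ> g = lft (a*a'+b*c') (a*b'+b*d') (c*a'+d*c') (c*b'+d*d')"
    using lft_comp[OF n1] g2(1) by auto
  finally have "lft a b c d ` X = lft (a*a'+b*c') (a*b'+b*d') (c*a'+d*c') (c*b'+d*d') ` S" .
  moreover have "lft (a*a'+b*c') (a*b'+b*d') (c*a'+d*c') (c*b'+d*d') \<in> psl2"
  proof -
    have "sqr ((a*a'+b*c')*(c*b'+d*d') - (a*b'+b*d')*(c*a'+d*c'))"
      unfolding det_comp by (rule sqr_mult[OF assms(1) g2(2)])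
    then show ?thesis unfolding psl2_iff by blast
  qed
  ultimately show ?thesis unfolding psl2_orbit_def by blast
qed



definition Trip :: "'a set \<Rightarrow> ('a \<times> 'a \<times> 'a) set" where
  "Trip B = {(x,y,z). x \<in> B \<and> y \<in> B \<and> z \<in> B \<and> x \<noteq> y \<and> x \<noteq> z \<and> y \<noteq> z}"

definition Good :: "'a::field set \<Rightarrow> 'a \<Rightarrow> ('a \<times> 'a \<times> 'a) set" where
  "Good B r = {(x,y,z) \<in> Trip B. sqr (detM r x y z)}"

definition FF :: "'a::field set \<Rightarrow> 'a \<Rightarrow> 'a \<times> 'a \<times> 'a \<Rightarrow> 'a option set" where
  "FF B r \<tau> = (case \<tau> of (x,y,z) \<Rightarrow> Mob r x y z ` Some ` B)"

definition STs :: "'a::field set \<Rightarrow> 'a option set \<Rightarrow> 'a option set set" where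
  "STs B T = {X \<in> psl2_orbit (Some ` B). T \<subseteq> X}"

definition Pset :: "'a::field set \<Rightarrow> ('a \<times> bool) set" where
  "Pset B = {t \<in> B. sqr t} \<times> UNIV"

definition sig :: "'a::field \<times> bool \<Rightarrow> 'a \<Rightarrow> 'a" where
  "sig \<pi> w = (if snd \<pi> then fst \<pi> / w else fst \<pi> * w)"

definition act :: "'a::field \<times> bool \<Rightarrow> 'a \<times> 'a \<times> 'a \<Rightarrow> 'a \<times> 'a \<times> 'a" where
  "act \<pi> \<tau> = (case \<tau> of (x,y,z) \<Rightarrow> (sig \<pi> x, sig \<pi> y, sig \<pi> z))"

definition Sl :: "'a::field \<times> bool \<Rightarrow> 'a \<times> 'a \<times> 'a \<times> 'a" where
  "Sl \<pi> = (if snd \<pi> then (0, fst \<pi>, 1, 0) else (fst \<pi>, 0, 0, 1))"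

lemma card_fibers:
  assumes "finite A" "\<forall>a\<in>A. card {a'\<in>A. f a' = f a} = m"
  shows "card A = card (f ` A) * m"
proof -
  have U: "A = (\<Union>y\<in>f ` A. {a\<in>A. f a = y})" by auto
  have "card A = (\<Sum>y\<in>f ` A. card {a\<in>A. f a = y})"
    by (subst U, rule card_UN_disjoint) (use assms(1) in auto)
  also have "\<dots> = (\<Sum>y\<in>f ` A. m)" using assms(2) by (intro sum.cong) auto
  finally show ?thesis by simp
qed

locale gsetup =
  fixes B :: "'a::{field,finite} set" and p n k :: nat
  assumes pr: "prime p" and cardq: "CARD('a) = p^n" and q4: "CARD('a) mod 4 = 1"
    and kp: "k < p" and k3: "3 \<le> k"
    and Bnz: "B \<subseteq> {x. x \<noteq> 0}" and Bmul: "\<forall>x\<in>B. \<forall>y\<in>B. x * y \<in> B"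
    and Binv: "\<forall>x\<in>B. inverse x \<in> B" and cardB: "card B = k" and B1: "1 \<in> B"
begin

lemma oddq: "odd CARD('a)" using q4 by presburger

lemma B0: "w \<in> B \<Longrightarrow> w \<noteq> 0" using Bnz by auto

lemma sig_B: "\<pi> \<in> Pset B \<Longrightarrow> w \<in> B \<Longrightarrow> sig \<pi> w \<in> B"
  unfolding Pset_def sig_def using Bmul Binv by (auto simp: divide_inverse)

lemma sig_inj: "\<pi> \<in> Pset B \<Longrightarrow> w \<in> B \<Longrightarrow> w' \<in> B \<Longrightarrow> sig \<pi> w = sig \<pi> w' \<Longrightarrow> w = w'"
  unfolding Pset_def sig_def using B0 by (auto simp: field_simps split: if_splits)

lemma sig_img: "\<pi> \<in> Pset B \<Longrightarrow> sig \<pi> ` B = B"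
proof -
  assume pi: "\<pi> \<in> Pset B"
  have "sig \<pi> ` B \<subseteq> B" using sig_B[OF pi] by auto
  moreover have "card (sig \<pi> ` B) = card B"
    by (rule card_image) (meson inj_onI sig_inj[OF pi])
  ultimately show ?thesis by (simp add: card_subset_eq)
qed

lemma Sl_det: "\<pi> \<in> Pset B \<Longrightarrow> (case Sl \<pi> of (a,b,c,d) \<Rightarrow> sqr (a*d - b*c))"
proof -
  assume pi: "\<pi> \<in> Pset B"
  then have s: "sqr (fst \<pi>)" unfolding Pset_def by auto
  have "sqr (-1 * fst \<pi>)" by (rule sqr_mult[OF sqr_minus1[OF q4] s])
  then show ?thesis unfolding Sl_def using s by auto
qed

lemma Sl_app: "\<pi> \<in> Pset B \<Longrightarrow> w \<in> B \<Longrightarrow> (case Sl \<pi> of (a,b,c,d) \<Rightarrow> lft a b c d (Some w)) = Some (sig \<pi> w)"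
  unfolding Sl_def sig_def using B0 by (auto simp: lft_Some)

lemma Mob_psl2: "sqr (detM r x y z) \<Longrightarrow> Mob r x y z \<in> psl2"
  unfolding psl2_iff Mob_def using detM_eq by metis

lemma claim1:
  assumes r: "r \<noteq> 0"
  shows "STs B {None, Some 0, Some r} = FF B r ` Good B r"
proof
  show "STs B {None, Some 0, Some r} \<subseteq> FF B r ` Good B r"
  proof
    fix X assume "X \<in> STs B {None, Some 0, Some r}"
    then have X: "X \<in> psl2_orbit (Some ` B)" "{None, Some 0, Some r} \<subseteq> X" unfolding STs_def by auto
    obtain g where g: "X = g ` Some ` B" "g \<in> psl2" using X(1) unfolding psl2_orbit_def by auto
    obtain a b c d where abcd: "g = lft a b c d" "sqr (a*d - b*c)" using g(2) psl2_iff by blast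
    obtain x where x: "x \<in> B" "g (Some x) = None" using X(2) g(1) by auto
    obtain y where y: "y \<in> B" "g (Some y) = Some 0" using X(2) g(1) by auto
    obtain z where z: "z \<in> B" "g (Some z) = Some r" using X(2) g(1) by auto
    have dist: "x \<noteq> y" "x \<noteq> z" "y \<noteq> z" using x y z r by auto
    have det0: "a*d - b*c \<noteq> 0" using sqr_nz[OF abcd(2)] .
    obtain \<mu> where mu: "lft a b c d = Mob r x y z" "\<mu> \<noteq> 0" "a*d - b*c = \<mu>^2 * detM r x y z"
      using Mob_unique[OF det0 r dist] x y z abcd(1) by auto
    have "detM r x y z = (a*d - b*c) / \<mu>^2" using mu by simp
    then have "sqr (detM r x y z)" using sqr_divide[OF abcd(2) sqr_square[OF mu(2)]] by simp
    then have "(x,y,z) \<in> Good B r" unfolding Good_def Trip_def using x y z dist by auto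
    moreover have "X = FF B r (x,y,z)" unfolding FF_def using g(1) abcd(1) mu(1) by simp
    ultimately show "X \<in> FF B r ` Good B r" by blast
  qed
next
  show "FF B r ` Good B r \<subseteq> STs B {None, Some 0, Some r}"
  proof
    fix X assume "X \<in> FF B r ` Good B r"
    then obtain x y z where t: "(x,y,z) \<in> Good B r" "X = Mob r x y z ` Some ` B"
      unfolding FF_def by auto
    have xyz: "x \<in> B" "y \<in> B" "z \<in> B" "x \<noteq> y" "x \<noteq> z" "y \<noteq> z" "sqr (detM r x y z)"
      using t(1) unfolding Good_def Trip_def by auto
    have "X \<in> psl2_orbit (Some ` B)" unfolding psl2_orbit_def using t(2) Mob_psl2[OF xyz(7)] by blast
    moreover have "{None, Some 0, Some r} \<subseteq> X"
      using Mob_pts[OF r xyz(4-6)] t(2) xyz(1-3) by (metis empty_subsetI image_eqI insert_subset)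
    ultimately show "X \<in> STs B {None, Some 0, Some r}" unfolding STs_def by auto
  qed
qed

lemma claim2a:
  assumes r: "r \<noteq> 0" and t: "\<tau> \<in> Good B r" and pi: "\<pi> \<in> Pset B"
  shows "act \<pi> \<tau> \<in> Good B r \<and> FF B r (act \<pi> \<tau>) = FF B r \<tau>"
proof -
  obtain x y z where tt: "\<tau> = (x,y,z)" by (cases \<tau>) auto
  have xyz: "x \<in> B" "y \<in> B" "z \<in> B" "x \<noteq> y" "x \<noteq> z" "y \<noteq> z" "sqr (detM r x y z)"
    using t unfolding tt Good_def Trip_def by auto
  define x' where "x' = sig \<pi> x"
  define y' where "y' = sig \<pi> y"
  define z' where "z' = sig \<pi> z"
  have xyz': "x' \<in> B" "y' \<in> B" "z' \<in> B" "x' \<noteq> y'" "x' \<noteq> z'" "y' \<noteq> z'"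
    unfolding x'_def y'_def z'_def using sig_B[OF pi] sig_inj[OF pi] xyz by metis+
  obtain a b c d where S: "Sl \<pi> = (a,b,c,d)" by (cases "Sl \<pi>") auto
  have Sdet: "sqr (a*d - b*c)" using Sl_det[OF pi] S by simp
  have Sapp: "w \<in> B \<Longrightarrow> lft a b c d (Some w) = Some (sig \<pi> w)" for w using Sl_app[OF pi] S by simp
  have Simg: "lft a b c d ` Some ` B = Some ` B"
  proof -
    have "lft a b c d ` Some ` B = Some ` sig \<pi> ` B" using Sapp by (force simp: image_iff)
    then show ?thesis using sig_img[OF pi] by simp
  qed
  define A' where "A' = r*(z'-x')"
  define B' where "B' = -(r*y'*(z'-x'))"
  define C' where "C' = z'-y'"
  define D' where "D' = -(x'*(z'-y'))"
  have M': "Mob r x' y' z' = lft A' B' C' D'" unfolding Mob_def A'_def B'_def C'_def D'_def ..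
  have dM': "A'*D' - B'*C' = detM r x' y' z'" unfolding A'_def B'_def C'_def D'_def by (rule detM_eq)
  have n1: "A'*D' - B'*C' \<noteq> 0" using dM' detM_nz[OF r xyz'(4-6)] by simp
  have n2: "a*d - b*c \<noteq> 0" using sqr_nz[OF Sdet] .
  define h where "h = lft (A'*a+B'*c) (A'*b+B'*d) (C'*a+D'*c) (C'*b+D'*d)"
  have comp: "Mob r x' y' z' (lft a b c d w) = h w" for w
    unfolding M' h_def by (rule lft_comp[OF n1 n2])
  have dh: "(A'*a+B'*c)*(C'*b+D'*d) - (A'*b+B'*d)*(C'*a+D'*c) = detM r x' y' z' * (a*d-b*c)"
    using det_comp dM' by metis
  have hpts: "h (Some x) = None" "h (Some y) = Some 0" "h (Some z) = Some r"
    unfolding comp[symmetric] using Sapp xyz Mob_pts[OF r xyz'(4-6)] x'_def y'_def z'_def by auto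
  have nh: "(A'*a+B'*c)*(C'*b+D'*d) - (A'*b+B'*d)*(C'*a+D'*c) \<noteq> 0" using dh n1 n2 dM' by simp
  obtain \<mu> where mu: "h = Mob r x y z" "\<mu> \<noteq> 0"
      "(A'*a+B'*c)*(C'*b+D'*d) - (A'*b+B'*d)*(C'*a+D'*c) = \<mu>^2 * detM r x y z"
    using Mob_unique[OF nh r xyz(4-6)] hpts unfolding h_def by metis
  have "detM r x' y' z' = (\<mu>^2 * detM r x y z) / (a*d-b*c)" using mu(3) dh n2 by (simp add: field_simps)
  then have "sqr (detM r x' y' z')"
    using sqr_divide[OF sqr_mult[OF sqr_square[OF mu(2)] xyz(7)] Sdet] by simp
  then have g: "act \<pi> \<tau> \<in> Good B r" unfolding tt act_def Good_def Trip_def using xyz' x'_def y'_def z'_def by auto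
  have "FF B r (act \<pi> \<tau>) = Mob r x' y' z' ` Some ` B" unfolding tt act_def FF_def x'_def y'_def z'_def by simp
  also have "\<dots> = Mob r x' y' z' ` lft a b c d ` Some ` B" using Simg by simp
  also have "\<dots> = h ` Some ` B" using comp by (simp add: image_image)
  also have "\<dots> = FF B r \<tau>" unfolding tt FF_def mu(1) by simp
  finally show ?thesis using g by simp
qed

lemma claim2b:
  assumes r: "r \<noteq> 0" and t: "\<tau> \<in> Good B r" and t': "\<tau>' \<in> Good B r"
    and eq: "FF B r \<tau>' = FF B r \<tau>"
  shows "\<exists>\<pi>\<in>Pset B. \<tau>' = act \<pi> \<tau>"
proof -
  obtain x y z where tt: "\<tau> = (x,y,z)" by (cases \<tau>) auto
  obtain x' y' z' where tt': "\<tau>' = (x',y',z')" by (cases \<tau>') auto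
  have xyz: "x \<in> B" "y \<in> B" "z \<in> B" "x \<noteq> y" "x \<noteq> z" "y \<noteq> z" "sqr (detM r x y z)"
    using t unfolding tt Good_def Trip_def by auto
  have xyz': "x' \<in> B" "y' \<in> B" "z' \<in> B" "x' \<noteq> y'" "x' \<noteq> z'" "y' \<noteq> z'" "sqr (detM r x' y' z')"
    using t' unfolding tt' Good_def Trip_def by auto
  define a where "a = r*(z-x)"
  define b where "b = -(r*y*(z-x))"
  define c where "c = z-y"
  define d where "d = -(x*(z-y))"
  define a' where "a' = r*(z'-x')"
  define b' where "b' = -(r*y'*(z'-x'))"
  define c' where "c' = z'-y'"
  define d' where "d' = -(x'*(z'-y'))"
  have M: "Mob r x y z = lft a b c d" unfolding Mob_def a_def b_def c_def d_def ..
  have M': "Mob r x' y' z' = lft a' b' c' d'" unfolding Mob_def a'_def b'_def c'_def d'_def ..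
  have dM: "a*d - b*c = detM r x y z" unfolding a_def b_def c_def d_def by (rule detM_eq)
  have dM': "a'*d' - b'*c' = detM r x' y' z'" unfolding a'_def b'_def c'_def d'_def by (rule detM_eq)
  have n1: "a*d - b*c \<noteq> 0" using dM sqr_nz[OF xyz(7)] by simp
  have n1': "d*a - (-b)*(-c) \<noteq> 0" using n1 by (simp add: algebra_simps)
  have n2: "a'*d' - b'*c' \<noteq> 0" using dM' sqr_nz[OF xyz'(7)] by simp
  define A where "A = d*a'+(-b)*c'"
  define Bb where "Bb = d*b'+(-b)*d'"
  define C where "C = (-c)*a'+a*c'"
  define D where "D = (-c)*b'+a*d'"
  have comp: "lft d (-b) (-c) a (lft a' b' c' d' w) = lft A Bb C D w" for w
    unfolding A_def Bb_def C_def D_def by (rule lft_comp[OF n1' n2])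
  have dh: "A*D - Bb*C = (d*a - (-b)*(-c)) * (a'*d' - b'*c')"
    unfolding A_def Bb_def C_def D_def by (rule det_comp)
  have dh2: "A*D - Bb*C = detM r x y z * detM r x' y' z'" using dh dM dM' by (simp add: algebra_simps)
  have sh: "sqr (A*D - Bb*C)" unfolding dh2 by (rule sqr_mult[OF xyz(7) xyz'(7)])
  have nh: "A*D - Bb*C \<noteq> 0" using sqr_nz[OF sh] .
  have bk: "lft d (-b) (-c) a (lft a b c d w) = w" for w using lft_inv(1)[OF n1] .
  have maps: "\<forall>w\<in>B. lft A Bb C D (Some w) \<in> Some ` B"
  proof
    fix w assume w: "w \<in> B"
    have "lft a' b' c' d' (Some w) \<in> FF B r \<tau>'" unfolding tt' FF_def using w by (simp add: M')
    then have "lft a' b' c' d' (Some w) \<in> lft a b c d ` Some ` B" using eq unfolding tt tt' FF_def by (simp add: M M')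
    then obtain w'' where w'': "w'' \<in> B" "lft a' b' c' d' (Some w) = lft a b c d (Some w'')" by auto
    have "lft A Bb C D (Some w) = Some w''" unfolding comp[symmetric] w''(2) bk ..
    then show "lft A Bb C D (Some w) \<in> Some ` B" using w''(1) by simp
  qed
  have hpt: "lft A Bb C D (Some x') = Some x" "lft A Bb C D (Some y') = Some y" "lft A Bb C D (Some z') = Some z"
  proof -
    have P1: "lft a b c d (Some x) = None" "lft a b c d (Some y) = Some 0" "lft a b c d (Some z) = Some r"
      using Mob_pts[OF r xyz(4-6)] unfolding M by auto
    have P2: "lft a' b' c' d' (Some x') = None" "lft a' b' c' d' (Some y') = Some 0" "lft a' b' c' d' (Some z') = Some r"
      using Mob_pts[OF r xyz'(4-6)] unfolding M' by auto
    show "lft A Bb C D (Some x') = Some x" unfolding comp[symmetric] P2 P1(1)[symmetric] bk ..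
    show "lft A Bb C D (Some y') = Some y" unfolding comp[symmetric] P2 P1(2)[symmetric] bk ..
    show "lft A Bb C D (Some z') = Some z" unfolding comp[symmetric] P2 P1(3)[symmetric] bk ..
  qed
  have cs: "(Bb = 0 \<and> C = 0) \<or> (A = 0 \<and> D = 0)"
    by (rule stab_B[OF pr cardq kp k3 Bnz Bmul Binv cardB nh maps])
  show ?thesis
  proof (cases "Bb = 0 \<and> C = 0")
    case True
    then have D0: "D \<noteq> 0" and A0: "A \<noteq> 0" using nh by auto
    have app: "lft A Bb C D (Some w) = Some ((A/D) * w)" for w using True D0 by (simp add: lft_Some)
    have t0B: "A/D \<in> B" using maps B1 app[of 1] by force
    have "A/D = (A*D - Bb*C)/D^2" using True D0 by (simp add: power2_eq_square)
    then have t0s: "sqr (A/D)" using sqr_divide[OF sh sqr_square[OF D0]] by simp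
    define \<pi> where "\<pi> = (inverse (A/D), False)"
    have pi: "\<pi> \<in> Pset B" unfolding \<pi>_def Pset_def using Binv t0B sqr_inverse[OF t0s] by auto
    have "x = (A/D) * x'" "y = (A/D) * y'" "z = (A/D) * z'" using hpt app by auto
    then have "x' = inverse (A/D) * x" "y' = inverse (A/D) * y" "z' = inverse (A/D) * z" using A0 D0 by auto
    then have "\<tau>' = act \<pi> \<tau>" unfolding tt tt' act_def sig_def \<pi>_def by simp
    then show ?thesis using pi by blast
  next
    case False
    then have AD: "A = 0" "D = 0" using cs by auto
    then have C0: "C \<noteq> 0" and B0': "Bb \<noteq> 0" using nh by auto
    have app: "w \<noteq> 0 \<Longrightarrow> lft A Bb C D (Some w) = Some ((Bb/C) / w)" for w using AD C0 by (simp add: lft_Some)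
    have t0B: "Bb/C \<in> B" using maps B1 app[of 1] by force
    have "Bb/C = ((-1) * (A*D - Bb*C))/C^2" using AD C0 by (simp add: power2_eq_square)
    then have t0s: "sqr (Bb/C)" using sqr_divide[OF sqr_mult[OF sqr_minus1[OF q4] sh] sqr_square[OF C0]] by simp
    define \<pi> where "\<pi> = (Bb/C, True)"
    have pi: "\<pi> \<in> Pset B" unfolding \<pi>_def Pset_def using t0B t0s by auto
    have nz: "x' \<noteq> 0" "y' \<noteq> 0" "z' \<noteq> 0" "x \<noteq> 0" "y \<noteq> 0" "z \<noteq> 0" using B0 xyz xyz' by auto
    have "x = (Bb/C) / x'" "y = (Bb/C) / y'" "z = (Bb/C) / z'" using hpt app nz by auto
    then have "x' = (Bb/C) / x" "y' = (Bb/C) / y" "z' = (Bb/C) / z" using nz B0' C0 by (auto simp: field_simps)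
    then have "\<tau>' = act \<pi> \<tau>" unfolding tt tt' act_def sig_def \<pi>_def by simp
    then show ?thesis using pi by blast
  qed
qed

lemma act_inj:
  assumes t: "\<tau> \<in> Trip B"
  shows "inj_on (\<lambda>\<pi>. act \<pi> \<tau>) (Pset B)"
proof (rule inj_onI)
  fix \<pi> \<pi>' assume pi: "\<pi> \<in> Pset B" and pi': "\<pi>' \<in> Pset B" and e: "act \<pi> \<tau> = act \<pi>' \<tau>"
  obtain x y z where tt: "\<tau> = (x,y,z)" by (cases \<tau>) auto
  have xyz: "x \<noteq> 0" "y \<noteq> 0" "z \<noteq> 0" "x \<noteq> y" "x \<noteq> z" "y \<noteq> z"
    using t B0 unfolding tt Trip_def by auto
  obtain t \<beta> where p1: "\<pi> = (t,\<beta>)" by (cases \<pi>) auto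
  obtain t' \<beta>' where p2: "\<pi>' = (t',\<beta>')" by (cases \<pi>') auto
  have nz: "t \<noteq> 0" "t' \<noteq> 0" using pi pi' B0 unfolding p1 p2 Pset_def by auto
  have ex: "sig \<pi> x = sig \<pi>' x" "sig \<pi> y = sig \<pi>' y" "sig \<pi> z = sig \<pi>' z"
    using e unfolding tt act_def by auto
  have mixed: False if "t * x = t' / x" "t * y = t' / y" "t * z = t' / z" "t \<noteq> 0" for t t' :: 'a
  proof -
    have "t * x^2 = t'" "t * y^2 = t'" "t * z^2 = t'" using that xyz by (auto simp: field_simps power2_eq_square)
    then have "t * x^2 = t * y^2" "t * x^2 = t * z^2" by auto
    moreover have "t \<noteq> 0" using that(4) .
    ultimately have "x^2 = y^2" "x^2 = z^2" by auto
    then have "y = -x" "z = -x" using xyz by (auto simp: power2_eq_iff)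
    then show False using xyz by simp
  qed
  show "\<pi> = \<pi>'"
  proof (cases \<beta>; cases \<beta>')
    assume "\<beta>" "\<beta>'" then show ?thesis using ex xyz unfolding p1 p2 sig_def by (auto simp: field_simps)
  next
    assume "\<not>\<beta>" "\<not>\<beta>'" then show ?thesis using ex xyz unfolding p1 p2 sig_def by auto
  next
    assume "\<beta>" "\<not>\<beta>'" then show ?thesis using ex mixed[of t' t] nz unfolding p1 p2 sig_def by auto
  next
    assume "\<not>\<beta>" "\<beta>'" then show ?thesis using ex mixed[of t t'] nz unfolding p1 p2 sig_def by auto
  qed
qed

lemma claim3:
  assumes r: "r \<noteq> 0"
  shows "card (Good B r) = card (STs B {None, Some 0, Some r}) * card (Pset B)"
proof -
  have fib: "\<forall>\<tau>\<in>Good B r. card {\<tau>'\<in>Good B r. FF B r \<tau>' = FF B r \<tau>} = card (Pset B)"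
  proof
    fix \<tau> assume t: "\<tau> \<in> Good B r"
    have "{\<tau>'\<in>Good B r. FF B r \<tau>' = FF B r \<tau>} = (\<lambda>\<pi>. act \<pi> \<tau>) ` Pset B"
      using claim2a[OF r t] claim2b[OF r t] by blast
    moreover have "\<tau> \<in> Trip B" using t unfolding Good_def by auto
    ultimately show "card {\<tau>'\<in>Good B r. FF B r \<tau>' = FF B r \<tau>} = card (Pset B)"
      using card_image[OF act_inj] by simp
  qed
  show ?thesis unfolding claim1[OF r] by (rule card_fibers[OF _ fib]) simp
qed

end



lemma card_Trip:
  assumes "finite B"
  shows "card (Trip B) = card B * (card B - 1) * (card B - 2)"
proof -
  have eq: "Trip B = Sigma B (\<lambda>x. Sigma (B - {x}) (\<lambda>y. B - {x, y}))"
    unfolding Trip_def by auto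
  have "card (Trip B) = (\<Sum>x\<in>B. \<Sum>y\<in>B - {x}. card (B - {x, y}))"
    unfolding eq using assms by (simp add: card_SigmaI)
  also have "\<dots> = (\<Sum>x\<in>B. \<Sum>y\<in>B - {x}. card B - 2)"
  proof (intro sum.cong refl)
    fix x y assume "x \<in> B" "y \<in> B - {x}"
    then have "{x,y} \<subseteq> B" "card {x,y} = 2" by auto
    then show "card (B - {x, y}) = card B - 2" using assms by (simp add: card_Diff_subset)
  qed
  also have "\<dots> = (\<Sum>x\<in>B. (card B - 1) * (card B - 2))"
    using assms by (intro sum.cong refl) (simp add: card_Diff_singleton)
  finally show ?thesis by (simp add: mult.assoc)
qed

context gsetup
begin

lemma detM_scale: "detM r x y z = r * detM 1 x y z"
  unfolding detM_def by (simp add: algebra_simps)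

lemma Good_partition:
  assumes v: "v \<noteq> 0" "\<not> sqr v"
  shows "Good B 1 \<inter> Good B v = {}" "Good B 1 \<union> Good B v = Trip B"
proof -
  show "Good B 1 \<inter> Good B v = {}"
  proof (rule ccontr)
    assume "Good B 1 \<inter> Good B v \<noteq> {}"
    then obtain x y z where "sqr (detM 1 x y z)" "sqr (detM v x y z)" unfolding Good_def by auto
    then have "sqr (detM v x y z / detM 1 x y z)" using sqr_divide by blast
    moreover have "detM 1 x y z \<noteq> 0" using \<open>sqr (detM 1 x y z)\<close> sqr_nz by blast
    ultimately have "sqr v" using detM_scale[of v x y z] by simp
    then show False using v by simp
  qed
  show "Good B 1 \<union> Good B v = Trip B"
  proof
    show "Good B 1 \<union> Good B v \<subseteq> Trip B" unfolding Good_def by auto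
    show "Trip B \<subseteq> Good B 1 \<union> Good B v"
    proof
      fix t assume t: "t \<in> Trip B"
      obtain x y z where tt: "t = (x,y,z)" by (cases t) auto
      have d: "x \<noteq> y" "x \<noteq> z" "y \<noteq> z" using t unfolding tt Trip_def by auto
      have nz: "detM 1 x y z \<noteq> 0" using detM_nz[OF _ d] by simp
      show "t \<in> Good B 1 \<union> Good B v"
      proof (cases "sqr (detM 1 x y z)")
        case True then show ?thesis using t unfolding tt Good_def by auto
      next
        case False
        then have "sqr (v * detM 1 x y z)" using nsqr_mult[OF oddq v(1) nz v(2)] by simp
        then show ?thesis using t unfolding tt Good_def detM_scale[of v] by auto
      qed
    qed
  qed
qed

lemma card_Good_sum:
  assumes v: "v \<noteq> 0" "\<not> sqr v"
  shows "card (Good B 1) + card (Good B v) = k * (k - 1) * (k - 2)"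
proof -
  have "card (Good B 1) + card (Good B v) = card (Good B 1 \<union> Good B v)"
    using Good_partition[OF v] by (subst card_Un_disjoint) auto
  also have "\<dots> = k * (k - 1) * (k - 2)" using Good_partition[OF v] card_Trip[of B] cardB by simp
  finally show ?thesis .
qed

lemma card_Pset: "card (Pset B) = 2 * card {t \<in> B. sqr t}"
  unfolding Pset_def by (simp add: card_cartesian_product)

lemma Bpow: "t \<in> B \<Longrightarrow> t ^ k = 1"
  using subgroup_pow[of B t] Bnz Bmul Binv cardB by simp

lemma sqB_even:
  assumes dv: "k dvd CARD('a) - 1" and ev: "even ((CARD('a) - 1) div k)" and t: "t \<in> B"
  shows "sqr t"
proof -
  define e where "e = (CARD('a) - 1) div k"
  have qe: "CARD('a) - 1 = k * e" using dv unfolding e_def by simp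
  obtain e2 where e2: "e = 2 * e2" using ev unfolding e_def[symmetric] by blast
  have h: "(CARD('a) - 1) div 2 = k * (e div 2)" using qe e2 by simp
  have "t ^ ((CARD('a) - 1) div 2) = 1" unfolding h power_mult Bpow[OF t] by simp
  then show ?thesis using euler_field[OF oddq] B0[OF t] by simp
qed

lemma sqB_odd:
  assumes dv: "k dvd CARD('a) - 1" and od: "odd ((CARD('a) - 1) div k)"
  shows "2 * card {t \<in> B. sqr t} = k" "\<exists>t0\<in>B. \<not> sqr t0"
proof -
  define e where "e = (CARD('a) - 1) div k"
  have qe: "CARD('a) - 1 = k * e" using dv unfolding e_def by simp
  have oe: "odd e" using od unfolding e_def .
  have "even (CARD('a) - 1)" using q4 by presburger
  then have "even (k * e)" using qe by metis
  then have ek: "even k" using oe by simp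
  define k2 where "k2 = k div 2"
  have kk: "k = 2 * k2" using ek unfolding k2_def by simp
  have k21: "k2 \<ge> 1" using k3 kk by simp
  have h: "(CARD('a) - 1) div 2 = k2 * e" using qe kk by simp
  have one: "(1::'a) \<noteq> -1" using two_ne_zero_field[OF oddq] by (metis add_eq_0_iff2 one_add_one)
  have u: "t ^ k2 = 1 \<or> t ^ k2 = -1" if "t \<in> B" for t
  proof -
    have "(t ^ k2) ^ 2 = 1" using Bpow[OF that] kk by (simp add: power_mult[symmetric] mult.commute)
    then have "(t^k2 - 1) * (t^k2 + 1) = 0" by (simp add: algebra_simps power2_eq_square)
    then show ?thesis by (auto simp: eq_neg_iff_add_eq_0)
  qed
  have sq_iff: "sqr t \<longleftrightarrow> t ^ k2 = 1" if "t \<in> B" for t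
  proof -
    have "t ^ ((CARD('a) - 1) div 2) = (t ^ k2) ^ e" unfolding h by (simp add: power_mult)
    also have "\<dots> = t ^ k2" using u[OF that] oe by auto
    finally show ?thesis using euler_field[OF oddq, of t] B0[OF that] by simp
  qed
  define Bp where "Bp = {t \<in> B. t ^ k2 = 1}"
  define Bm where "Bm = {t \<in> B. t ^ k2 = -1}"
  have un: "B = Bp \<union> Bm" using u unfolding Bp_def Bm_def by auto
  have dj: "Bp \<inter> Bm = {}" using one unfolding Bp_def Bm_def by auto
  have cp: "card Bp \<le> k2"
  proof -
    have "card Bp \<le> card {x::'a. x ^ k2 = 1}" unfolding Bp_def by (intro card_mono) auto
    then show ?thesis using card_roots_le(1)[OF k21, where a="1::'a"] by simp
  qed
  have cm: "card Bm \<le> k2"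
  proof -
    have "card Bm \<le> card {x::'a. x ^ k2 = -1}" unfolding Bm_def by (intro card_mono) auto
    then show ?thesis using card_roots_le(1)[OF k21, where a="-1::'a"] by simp
  qed
  have "card Bp + card Bm = k" using un dj cardB by (metis card_Un_disjoint finite)
  then have cpe: "card Bp = k2" "card Bm = k2" using cp cm kk by auto
  have "{t \<in> B. sqr t} = Bp" unfolding Bp_def using sq_iff by auto
  then show "2 * card {t \<in> B. sqr t} = k" using cpe kk by simp
  have "Bm \<noteq> {}" using cpe k21 by auto
  then obtain t0 where "t0 \<in> Bm" by auto
  then have "t0 \<in> B" "\<not> sqr t0" using sq_iff one unfolding Bm_def by auto
  then show "\<exists>t0\<in>B. \<not> sqr t0" by blast
qed

end



context gsetup
begin

lemma detM_mult: "detM r (t*x) (t*y) (t*z) = t^3 * detM r x y z"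
  unfolding detM_def by (simp add: algebra_simps power3_eq_cube)

lemma card_Good_eq:
  assumes v: "v \<noteq> 0" "\<not> sqr v" and t0: "t0 \<in> B" "\<not> sqr t0"
  shows "card (Good B 1) = card (Good B v)"
proof -
  have t00: "t0 \<noteq> 0" using B0 t0 by auto
  define m where "m = (\<lambda>(x,y,z). (t0*x, t0*y, t0*z))"
  have inj: "inj_on m A" for A unfolding m_def using t00 by (auto simp: inj_on_def)
  have vt: "sqr (v * t0)" using nsqr_mult[OF oddq v(1) t00 v(2) t0(2)] .
  have t2: "sqr (t0^2)" using sqr_square[OF t00] .
  have trip: "m \<tau> \<in> Trip B" if "\<tau> \<in> Trip B" for \<tau>
    using that t0(1) Bmul t00 unfolding m_def Trip_def by auto
  have m1: "m ` Good B 1 \<subseteq> Good B v"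
  proof
    fix \<tau>' assume "\<tau>' \<in> m ` Good B 1"
    then obtain x y z where g: "(x,y,z) \<in> Good B 1" "\<tau>' = m (x,y,z)" by auto
    have s: "sqr (detM 1 x y z)" using g(1) unfolding Good_def by auto
    have "detM v (t0*x) (t0*y) (t0*z) = (v*t0) * t0^2 * detM 1 x y z"
      unfolding detM_mult detM_scale[of v] by (simp add: power3_eq_cube power2_eq_square algebra_simps)
    then have "sqr (detM v (t0*x) (t0*y) (t0*z))" using sqr_mult[OF sqr_mult[OF vt t2] s] by simp
    then show "\<tau>' \<in> Good B v" using g trip[of "(x,y,z)"] unfolding Good_def m_def by auto
  qed
  have m2: "m ` Good B v \<subseteq> Good B 1"
  proof
    fix \<tau>' assume "\<tau>' \<in> m ` Good B v"
    then obtain x y z where g: "(x,y,z) \<in> Good B v" "\<tau>' = m (x,y,z)" by auto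
    have s: "sqr (detM v x y z)" using g(1) unfolding Good_def by auto
    have "detM 1 (t0*x) (t0*y) (t0*z) = ((v*t0) * t0^2 * detM v x y z) / v^2"
      unfolding detM_mult detM_scale[of v] using v(1) by (simp add: power3_eq_cube power2_eq_square field_simps)
    then have "sqr (detM 1 (t0*x) (t0*y) (t0*z))"
      using sqr_divide[OF sqr_mult[OF sqr_mult[OF vt t2] s] sqr_square[OF v(1)]] by simp
    then show "\<tau>' \<in> Good B 1" using g trip[of "(x,y,z)"] unfolding Good_def m_def by auto
  qed
  have "card (Good B 1) \<le> card (Good B v)"
    using card_inj_on_le[OF inj m1] by simp
  moreover have "card (Good B v) \<le> card (Good B 1)"
    using card_inj_on_le[OF inj m2] by simp
  ultimately show ?thesis by simp
qed

lemma STs_invariant: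
  fixes a b c d :: 'a
  assumes s: "sqr (a*d - b*c)"
  shows "card (STs B (lft a b c d ` T)) = card (STs B T)"
proof -
  let ?g = "lft a b c d"
  let ?h = "lft d (-b) (-c) a"
  have n: "a*d - b*c \<noteq> 0" using sqr_nz[OF s] .
  have s2: "sqr (d*a - (-b)*(-c))" using s by (simp add: mult.commute)
  have gh: "?g (?h w) = w" "?h (?g w) = w" for w using lft_inv[OF n] by auto
  have eq: "STs B (?g ` T) = (\<lambda>X. ?g ` X) ` STs B T"
  proof
    show "(\<lambda>X. ?g ` X) ` STs B T \<subseteq> STs B (?g ` T)"
      unfolding STs_def using orbit_closed[OF s] by auto
    show "STs B (?g ` T) \<subseteq> (\<lambda>X. ?g ` X) ` STs B T"
    proof
      fix Y assume Y: "Y \<in> STs B (?g ` T)"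
      have "?h ` Y \<in> psl2_orbit (Some ` B)" using Y orbit_closed[OF s2] unfolding STs_def by auto
      moreover have "T \<subseteq> ?h ` Y"
      proof
        fix w assume "w \<in> T"
        then have "?g w \<in> Y" using Y unfolding STs_def by auto
        then show "w \<in> ?h ` Y" using gh(2)[of w] by (metis image_eqI)
      qed
      moreover have "Y = ?g ` (?h ` Y)" by (simp add: image_image gh(1))
      ultimately show "Y \<in> (\<lambda>X. ?g ` X) ` STs B T" unfolding STs_def by blast
    qed
  qed
  have "inj_on (\<lambda>X. ?g ` X) (STs B T)"
    using inj_image_eq_iff[OF lft_inj[OF n]] by (auto simp: inj_on_def)
  then show ?thesis unfolding eq by (rule card_image)
qed

lemma reduce:
  assumes v: "v \<noteq> 0" "\<not> sqr v" and T: "card T = 3"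
  shows "\<exists>a b c d r. sqr (a*d - b*c) \<and> (r = 1 \<or> r = v) \<and> lft a b c d ` T = {None, Some 0, Some (r::'a)}"
proof -
  obtain P Q R where T3: "T = {P, Q, R}" "P \<noteq> Q" "Q \<noteq> R" "P \<noteq> R" using T card_3_iff by metis
  have choose: "\<exists>r. (r = 1 \<or> r = v) \<and> sqr (r * D)" if "D \<noteq> 0" for D :: 'a
  proof (cases "sqr D")
    case True then show ?thesis by auto
  next
    case False then show ?thesis using nsqr_mult[OF oddq v(1) that v(2) False] by auto
  qed
  show ?thesis
  proof (cases "None \<in> T")
    case True
    have "\<exists>u w. T = {None, Some u, Some w} \<and> u \<noteq> w"
    proof -
      have "\<exists>u w. {P,Q,R} = {None, Some u, Some w} \<and> u \<noteq> w" if "None \<in> {P,Q,R}" "P \<noteq> Q" "Q \<noteq> R" "P \<noteq> R"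
        for P Q R :: "'a option"
        using that by (cases P; cases Q; cases R) (auto simp: insert_commute)
      then show ?thesis using True T3 by auto
    qed
    then obtain u w where uw: "T = {None, Some u, Some w}" "u \<noteq> w" by blast
    obtain r where r: "r = 1 \<or> r = v" "sqr (r * (w - u))" using choose[of "w - u"] uw(2) by auto
    have r0: "r \<noteq> 0" using r(1) v(1) by auto
    have e: "(r * w - r * u) / (w - u) = r" using uw(2)
      by (simp add: right_diff_distrib[symmetric])
    have "lft r (-r*u) 0 (w-u) ` T = {None, Some 0, Some r}"
      unfolding uw(1) using uw(2) r0 by (simp add: lft_Some lft_None field_simps e)
    moreover have "sqr (r * (w-u) - (-r*u) * 0)" using r(2) by simp
    ultimately show ?thesis using r(1) by blast
  next
    case False
    have "\<exists>x y z. T = {Some x, Some y, Some z} \<and> x \<noteq> y \<and> x \<noteq> z \<and> y \<noteq> z"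
      using False T3 by (cases P; cases Q; cases R) auto
    then obtain x y z where xyz: "T = {Some x, Some y, Some z}" "x \<noteq> y" "x \<noteq> z" "y \<noteq> z" by blast
    obtain r where r: "r = 1 \<or> r = v" "sqr (r * detM 1 x y z)" using choose[of "detM 1 x y z"] detM_nz[OF _ xyz(2-4), of 1] by auto
    have r0: "r \<noteq> 0" using r(1) v(1) by auto
    have "Mob r x y z ` T = {None, Some 0, Some r}" unfolding xyz(1) using Mob_pts[OF r0 xyz(2-4)] by simp
    moreover have "sqr (detM r x y z)" using r(2) detM_scale[of r] by simp
    ultimately show ?thesis using r(1) unfolding Mob_def using detM_eq by metis
  qed
qed

end



lemma block_card:
  assumes "X \<in> psl2_orbit (Some ` B)" "finite B"
  shows "card X = card (B :: 'a::field set)"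
proof -
  obtain g where g: "X = g ` Some ` B" "g \<in> psl2" using assms(1) unfolding psl2_orbit_def by auto
  obtain a b c d where abcd: "g = lft a b c d" "sqr (a*d - b*c)" using g(2) psl2_iff by blast
  have "inj g" using lft_inj[OF sqr_nz[OF abcd(2)]] abcd(1) by simp
  then have "card X = card (Some ` B)" unfolding g(1) by (simp add: card_image inj_on_subset)
  also have "\<dots> = card B" by (simp add: card_image)
  finally show ?thesis .
qed

lemma design_at:
  assumes "gives_3_design (B::'a::{field,finite} set) k lam" "card (T::'a option set) = 3"
  shows "card {X \<in> psl2_orbit (Some ` B). T \<subseteq> X} = lam" "lam > 0"
  using assms unfolding gives_3_design_def is_3_design_def by blast+

theorem theorem2p5:
  fixes B :: "'a::{field,finite} set"
    and p n q k e :: nat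
  assumes "prime p" and "odd p"
    and "q = p ^ n" and "card (UNIV :: 'a set) = q"
    and "q mod 4 = 1"
    and "k dvd q - 1" and "k < p"
    and "e = (q - 1) div k"
    and "B \<subseteq> {x. x \<noteq> 0}" and "1 \<in> B"
    and "\<forall>x\<in>B. \<forall>y\<in>B. x * y \<in> B" and "\<forall>x\<in>B. inverse x \<in> B"
    and "card B = k"
  shows "(odd e \<longrightarrow> gives_3_design B k ((k - 1) * (k - 2) div 2) \<and> 2 * ((k - 1) * (k - 2) div 2) = (k - 1) * (k - 2))
       \<and> (\<forall>lam::nat. even e \<longrightarrow> gives_3_design B k lam \<longrightarrow> 4 * lam = (k - 1) * (k - 2))"
proof -
  note A = assms
  have q: "CARD('a) = q" using A(4) by simp
  have oddq: "odd CARD('a)" using A(5) q by presburger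
  have k1: "k \<ge> 1" using A(13) A(10) by (metis One_nat_def Suc_leI card_gt_0_iff empty_iff finite)
  have T0: "{None, Some 0, Some (1::'a)} \<subseteq> (UNIV :: 'a option set)" "card {None, Some 0, Some (1::'a)} = 3" by auto
  have small: False if "k < 3" "gives_3_design B k lam" for lam
  proof -
    have des: "lam > 0" "card {X \<in> psl2_orbit (Some ` B). {None, Some 0, Some (1::'a)} \<subseteq> X} = lam"
      using design_at[OF that(2) T0(2)] by auto
    have E: "{X \<in> psl2_orbit (Some ` B). {None, Some 0, Some (1::'a)} \<subseteq> X} = {}"
    proof (rule ccontr)
      assume "\<not> ?thesis"
      then obtain X where X: "X \<in> psl2_orbit (Some ` B)" "{None, Some 0, Some (1::'a)} \<subseteq> X" by auto
      have "card X = k" using block_card[OF X(1)] A(13) by simp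
      moreover have "card {None, Some 0, Some (1::'a)} \<le> card X" by (rule card_mono[OF _ X(2)]) simp
      ultimately show False using T0 that(1) by simp
    qed
    have "lam = 0" using des(2) unfolding E by simp
    then show False using des(1) by simp
  qed
  show ?thesis
  proof (cases "k < 3")
    case True
    have ee: "even e"
    proof -
      have "k = 1 \<or> k = 2" using True k1 by auto
      moreover have "even (q - 1)" "even ((q - 1) div 2)" using A(5) by presburger+
      ultimately show ?thesis using A(8) by auto
    qed
    show ?thesis using ee small True by auto
  next
    case False
    then have k3: "3 \<le> k" by simp
    interpret gsetup B p n k
      by unfold_locales (use A k3 q in auto)
    obtain v :: 'a where v: "v \<noteq> 0" "\<not> sqr v" using nonsq_exists[OF oddq] by blast
    have dv: "k dvd CARD('a) - 1" using A(6) q by simp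
    have eq: "e = (CARD('a) - 1) div k" using A(8) q by simp
    have STs_eq: "STs B T = {X \<in> psl2_orbit (Some ` B). T \<subseteq> X}" for T unfolding STs_def ..
    have kpos: "k > 0" using k3 by simp
    have part2: "4 * lam = (k - 1) * (k - 2)" if ev: "even e" and des: "gives_3_design B k lam" for lam
    proof -
      have allsq: "{t \<in> B. sqr t} = B" using sqB_even[OF dv] ev eq by auto
      have cP: "card (Pset B) = 2 * k" unfolding card_Pset allsq cardB ..
      have T1: "{None, Some 0, Some v} \<subseteq> (UNIV :: 'a option set)" "card {None, Some 0, Some v} = 3" using v by auto
      have l1: "card (STs B {None, Some 0, Some 1}) = lam"
        using design_at[OF des T0(2)] unfolding STs_eq by auto
      have l2: "card (STs B {None, Some 0, Some v}) = lam"
        using design_at[OF des T1(2)] unfolding STs_eq by auto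
      have "card (Good B 1) = lam * (2 * k)" using claim3[of 1] l1 cP by simp
      moreover have "card (Good B v) = lam * (2 * k)" using claim3[OF v(1)] l2 cP by simp
      ultimately have "lam * (2 * k) + lam * (2 * k) = k * (k - 1) * (k - 2)" using card_Good_sum[OF v] by simp
      moreover have "lam * (2 * k) + lam * (2 * k) = k * (4 * lam)" by simp
      moreover have "k * (k - 1) * (k - 2) = k * ((k - 1) * (k - 2))" by (simp only: mult.assoc)
      ultimately have "k * (4 * lam) = k * ((k - 1) * (k - 2))" by metis
      then show ?thesis using kpos by simp
    qed
    have part1: "gives_3_design B k ((k - 1) * (k - 2) div 2) \<and> 2 * ((k - 1) * (k - 2) div 2) = (k - 1) * (k - 2)"
      if od: "odd e"
    proof -
      have od': "odd ((CARD('a) - 1) div k)" using od eq by simp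
      obtain t0 where t0: "t0 \<in> B" "\<not> sqr t0" using sqB_odd(2)[OF dv od'] by blast
      have cP: "card (Pset B) = k" unfolding card_Pset using sqB_odd(1)[OF dv od'] .
      have ge: "card (Good B 1) = card (Good B v)" by (rule card_Good_eq[OF v t0])
      have evp: "even ((k - 1) * (k - 2))"
      proof (cases "even k")
        case True then have "even (k - 2)" using k3 by simp
        then show ?thesis by simp
      next
        case False then have "even (k - 1)" using k3 by simp
        then show ?thesis by simp
      qed
      define lam where "lam = (k - 1) * (k - 2) div 2"
      have lam2: "2 * lam = (k - 1) * (k - 2)" unfolding lam_def using evp by simp
      have Sr: "card (STs B {None, Some 0, Some r}) = lam" if r: "r = 1 \<or> r = v" for r
      proof -
        have r0: "r \<noteq> 0" using r v by auto
        have "card (Good B r) = card (Good B 1)" using r ge by auto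
        then have "2 * card (Good B r) = k * (k - 1) * (k - 2)" using card_Good_sum[OF v] ge by simp
        moreover have "card (Good B r) = card (STs B {None, Some 0, Some r}) * k" using claim3[OF r0] cP by simp
        moreover have "k * (k - 1) * (k - 2) = k * (2 * lam)" using lam2 by (simp only: mult.assoc)
        ultimately have "k * (2 * card (STs B {None, Some 0, Some r})) = k * (2 * lam)"
          by (metis mult.assoc mult.commute)
        then show ?thesis using kpos by simp
      qed
      have lampos: "lam > 0"
      proof -
        have "(k - 1) * (k - 2) > 0" using k3 by simp
        then have "2 * lam > 0" using lam2 by linarith
        then show ?thesis by simp
      qed
      have design: "card {X \<in> psl2_orbit (Some ` B). T \<subseteq> X} = lam" if T: "card T = 3" for T :: "'a option set"
      proof -
        obtain a b c d r where g: "sqr (a*d - b*c)" "r = 1 \<or> r = v" "lft a b c d ` T = {None, Some 0, Some r}"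
          using reduce[OF v T] by blast
        have "card (STs B T) = card (STs B (lft a b c d ` T))" using STs_invariant[OF g(1)] by simp
        also have "\<dots> = lam" unfolding g(3) using Sr[OF g(2)] .
        finally show ?thesis unfolding STs_eq .
      qed
      have "gives_3_design B k lam"
        unfolding gives_3_design_def is_3_design_def
        using design lampos block_card[of _ B] cardB by (auto simp: q A(3)[symmetric])
      then show ?thesis using lam2 unfolding lam_def by simp
    qed
    show ?thesis using part1 part2 by blast
  qed
qed

end
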